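(* Let $\phi$ assign to each matroid $M$ on $E$ the class in $K_T^0(X_E)$ given by a fixed polynomial expression in the exterior powers of $[\mathcal S_M]$, $[\mathcal Q_M]$, $[\mathcal S_M^\vee]$, $[\mathcal Q_M^\vee]$, and let $\psi$ assign to $M$ the (equivariant or non-equivariant) Chow class on $X_E$ given by a fixed polynomial expression in the (equivariant or non-equivariant, respectively) Chern classes of $[\mathcal S_M]$, $[\mathcal Q_M]$ and their duals. Then $\phi$ and $\psi$ are valuative.
   Context: $E=\{0,\dots,n\}$, $T=(\mathbb C^* )^E$, $X_E$ the permutohedral variety (toric variety of the fan in $\mathbb R^E/\mathbb R\mathbf 1$ with cones $\operatorname{Cone}(\overline{\mathbf e}_{S_1},\dots,\overline{\mathbf e}_{S_k})$ for chains of nonempty proper subsets), fixed points $p_\sigma$ indexed by permutations of $E$; $K_T^0(X_E)$ embeds in $\prod_\sigma\mathbb Z[T_0^{\pm1},\dots,T_n^{\pm1}]$ by restriction. $B_\sigma(M)$ is the lexicographically first basis for the order $\sigma(0)\prec\cdots\prec\sigma(n)$; $[\mathcal S_M],[\mathcal Q_M]\in K_T^0(X_E)$ restrict at $p_\sigma$ to $\sum_{i\in B_\sigma(M)}T_i^{-1}$ and $\sum_{i\notin B_\sigma(M)}T_i^{-1}$; $\vee$ is dual. The base polytope of $M$ is $P(M)=\operatorname{Conv}(\sum_{i\in B}\mathbf e_i: B\text{ a basis})\subset\mathbb R^E$, and $1_P$ denotes the indicator function. A function $\phi$ from matroids on $E$ to an abelian group is valuative if whenever $M_1,\dots,M_\ell$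 are matroids on $E$ and $a_i\in\mathbb Z$ with $\sum_ia_i1_{P(M_i)}=0$, one has $\sum_ia_i\phi(M_i)=0$. *)

theory Defs
  imports Complex_Main "HOL-Library.Poly_Mapping" "HOL-Library.Function_Algebras" "HOL-Library.Indicator_Function"
    "HOL-Combinatorics.Permutations" "HOL-Combinatorics.Transposition"
begin

definition matroid_on :: "nat set \<Rightarrow> nat set set \<Rightarrow> bool" where
  "matroid_on E \<B> \<longleftrightarrow> \<B> \<noteq> {} \<and> (\<forall>B\<in>\<B>. B \<subseteq> E) \<and>
     (\<forall>B1\<in>\<B>. \<forall>B2\<in>\<B>. \<forall>x\<in>B1 - B2. \<exists>y\<in>B2 - B1. insert y (B1 - {x}) \<in> \<B>)"

text \<open>Base polytope P(M) = Conv(e_B : B a basis) in R^E; points of R^E are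
  functions nat => real (coordinates outside E are irrelevant: they vanish on P(M)).\<close>
definition base_polytope :: "nat set set \<Rightarrow> (nat \<Rightarrow> real) set" where
  "base_polytope \<B> = {x. \<exists>w :: nat set \<Rightarrow> real. (\<forall>B\<in>\<B>. 0 \<le> w B) \<and> (\<Sum>B\<in>\<B>. w B) = 1 \<and>
       x = (\<lambda>j. \<Sum>B\<in>\<B>. w B * (if j \<in> B then 1 else 0))}"

definition zsmult :: "int \<Rightarrow> 'g::ab_group_add \<Rightarrow> 'g" where
  "zsmult k x = (if 0 \<le> k then (\<Sum>_<nat k. x) else - (\<Sum>_<nat (- k). x))"

definition valuative :: "nat \<Rightarrow> (nat set set \<Rightarrow> 'g::ab_group_add) \<Rightarrow> bool" where
  "valuative n \<phi> \<longleftrightarrow>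
    (\<forall>(Ms :: nat set set list) (a :: int list).
       length a = length Ms \<longrightarrow> (\<forall>M\<in>set Ms. matroid_on {..n} M) \<longrightarrow>
       (\<forall>x. (\<Sum>i<length Ms. a ! i * indicator (base_polytope (Ms ! i)) x) = (0::int)) \<longrightarrow>
       (\<Sum>i<length Ms. zsmult (a ! i) (\<phi> (Ms ! i))) = 0)"

text \<open>sigma permutes {..n}; the order is sigma 0 < sigma 1 < ... < sigma n, so
  the position of i is inv sigma i. A set is compared through the sorted list of
  positions of its elements.\<close>
definition sorted_positions :: "(nat \<Rightarrow> nat) \<Rightarrow> nat set \<Rightarrow> nat list" where
  "sorted_positions \<sigma> B = sorted_list_of_set (inv \<sigma> ` B)"

definition lex_first_basis :: "nat set set \<Rightarrow> (nat \<Rightarrow> nat) \<Rightarrow> nat set" where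
  "lex_first_basis \<B> \<sigma> = (THE B. B \<in> \<B> \<and> (\<forall>B'\<in>\<B>. B' \<noteq> B \<longrightarrow>
       (sorted_positions \<sigma> B, sorted_positions \<sigma> B') \<in> lexord {(i, j). i < j}))"

type_synonym laurent = "(nat \<Rightarrow>\<^sub>0 int) \<Rightarrow>\<^sub>0 int"
type_synonym cpoly = "(nat \<Rightarrow>\<^sub>0 nat) \<Rightarrow>\<^sub>0 int"

definition TT :: "nat \<Rightarrow> laurent" where "TT i = Poly_Mapping.single (Poly_Mapping.single i 1) 1"
definition TTinv :: "nat \<Rightarrow> laurent" where "TTinv i = Poly_Mapping.single (Poly_Mapping.single i (-1)) 1"
definition tt :: "nat \<Rightarrow> cpoly" where "tt i = Poly_Mapping.single (Poly_Mapping.single i 1) 1"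

definition elem_sym :: "nat \<Rightarrow> (nat \<Rightarrow> 'a::comm_ring_1) \<Rightarrow> nat set \<Rightarrow> 'a" where
  "elem_sym k x A = (\<Sum>S\<in>{S. S \<subseteq> A \<and> card S = k}. \<Prod>i\<in>S. x i)"

definition mono_eval :: "('v \<Rightarrow> 'a::comm_ring_1) \<Rightarrow> ('v \<Rightarrow>\<^sub>0 nat) \<Rightarrow> 'a" where
  "mono_eval x e = (\<Prod>v\<in>Poly_Mapping.keys e. x v ^ Poly_Mapping.lookup e v)"

definition poly_eval :: "('v \<Rightarrow> 'a::comm_ring_1) \<Rightarrow> (('v \<Rightarrow>\<^sub>0 nat) \<Rightarrow>\<^sub>0 int) \<Rightarrow> 'a" where
  "poly_eval x p = (\<Sum>e\<in>Poly_Mapping.keys p. of_int (Poly_Mapping.lookup p e) * mono_eval x e)"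

datatype vb = Sb | Qb | Sdual | Qdual

text \<open>Variables (b, k) stand for lambda^k of the vector bundle b (K-theory) or c_k of b (Chow).\<close>

text \<open>[S_M] at p_sigma is sum_{i in B_sigma} T_i^{-1}; lambda^k of a sum of characters
  is the k-th elementary symmetric function of the characters.\<close>
definition ext_power_at :: "nat \<Rightarrow> nat set set \<Rightarrow> (nat \<Rightarrow> nat) \<Rightarrow> vb \<Rightarrow> nat \<Rightarrow> laurent" where
  "ext_power_at n \<B> \<sigma> b k = (let B = lex_first_basis \<B> \<sigma> in case b of
      Sb \<Rightarrow> elem_sym k TTinv B
    | Qb \<Rightarrow> elem_sym k TTinv ({..n} - B)
    | Sdual \<Rightarrow> elem_sym k TT B
    | Qdual \<Rightarrow> elem_sym k TT ({..n} - B))"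

text \<open>The K-class phi(M), embedded in prod_sigma Z[T^{+-1}] (value 0 off permutations).\<close>
definition K_class :: "nat \<Rightarrow> ((vb \<times> nat \<Rightarrow>\<^sub>0 nat) \<Rightarrow>\<^sub>0 int) \<Rightarrow> nat set set \<Rightarrow> (nat \<Rightarrow> nat) \<Rightarrow> laurent" where
  "K_class n P \<B> \<sigma> = (if \<sigma> permutes {..n} then poly_eval (\<lambda>(b, k). ext_power_at n \<B> \<sigma> b k) P else 0)"

text \<open>Equivariant Chern classes: the character T_i^{-1} has weight -t_i, T_i weight t_i;
  c^T_k of a sum of characters is e_k of the weights.\<close>
definition chern_at :: "nat \<Rightarrow> nat set set \<Rightarrow> (nat \<Rightarrow> nat) \<Rightarrow> vb \<Rightarrow> nat \<Rightarrow> cpoly" where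
  "chern_at n \<B> \<sigma> b k = (let B = lex_first_basis \<B> \<sigma> in case b of
      Sb \<Rightarrow> elem_sym k (\<lambda>i. - tt i) B
    | Qb \<Rightarrow> elem_sym k (\<lambda>i. - tt i) ({..n} - B)
    | Sdual \<Rightarrow> elem_sym k tt B
    | Qdual \<Rightarrow> elem_sym k tt ({..n} - B))"

text \<open>Equivariant Chow class psi(M) in A_T(X_E), embedded in prod_sigma Z[t].\<close>
definition chowT_class :: "nat \<Rightarrow> ((vb \<times> nat \<Rightarrow>\<^sub>0 nat) \<Rightarrow>\<^sub>0 int) \<Rightarrow> nat set set \<Rightarrow> (nat \<Rightarrow> nat) \<Rightarrow> cpoly" where
  "chowT_class n P \<B> \<sigma> = (if \<sigma> permutes {..n} then poly_eval (\<lambda>(b, k). chern_at n \<B> \<sigma> b k) P else 0)"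

text \<open>A_T(X_E) as the image of localization (GKM description): tuples (f_sigma) such that
  f_sigma - f_{sigma (k k+1)} is divisible by t_{sigma k} - t_{sigma (k+1)}.\<close>
definition chowT_ring :: "nat \<Rightarrow> ((nat \<Rightarrow> nat) \<Rightarrow> cpoly) set" where
  "chowT_ring n = {f. (\<forall>\<sigma>. \<not> \<sigma> permutes {..n} \<longrightarrow> f \<sigma> = 0) \<and>
     (\<forall>\<sigma>. \<sigma> permutes {..n} \<longrightarrow> (\<forall>k<n.
        (tt (\<sigma> k) - tt (\<sigma> (Suc k))) dvd (f \<sigma> - f (\<sigma> \<circ> transpose k (Suc k)))))}"

text \<open>The kernel of A_T(X_E) -> A(X_E).\<close>
definition forget_kernel :: "nat \<Rightarrow> ((nat \<Rightarrow> nat) \<Rightarrow> cpoly) set" where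
  "forget_kernel n = {f. \<exists>g. (\<forall>j\<le>n. g j \<in> chowT_ring n) \<and> f = (\<Sum>j\<le>n. (\<lambda>\<sigma>. tt j * g j \<sigma>))}"

text \<open>The non-equivariant class psi(M) is the image of chowT_class under forgetting; valuativity
  of a map into the quotient A(X_E) means the combination lies in the kernel.\<close>
definition valuative_nonequiv :: "nat \<Rightarrow> (nat set set \<Rightarrow> (nat \<Rightarrow> nat) \<Rightarrow> cpoly) \<Rightarrow> bool" where
  "valuative_nonequiv n \<psi> \<longleftrightarrow>
    (\<forall>(Ms :: nat set set list) (a :: int list).
       length a = length Ms \<longrightarrow> (\<forall>M\<in>set Ms. matroid_on {..n} M) \<longrightarrow>
       (\<forall>x. (\<Sum>i<length Ms. a ! i * indicator (base_polytope (Ms ! i)) x) = (0::int)) \<longrightarrow>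
       (\<Sum>i<length Ms. zsmult (a ! i) (\<psi> (Ms ! i))) \<in> forget_kernel n)"

end

theory Submission
  imports Defs "HOL-Analysis.Analysis"
begin


lemma oneD:
  fixes I :: "'i set" and a :: "'i \<Rightarrow> int" and F :: "'i \<Rightarrow> real set" and lo hi :: "'i \<Rightarrow> real"
  assumes fin: "finite I"
    and iv: "\<And>i. i \<in> I \<Longrightarrow> F i \<noteq> {} \<Longrightarrow> lo i \<le> hi i \<and> F i = {lo i..hi i}"
    and rel: "\<And>t. (\<Sum>i\<in>I. a i * indicator (F i) t) = 0"
  shows "(\<Sum>i\<in>{i\<in>I. F i \<noteq> {} \<and> hi i = h}. a i) = 0"
proof -
  let ?N = "{i\<in>I. F i \<noteq> {}}"
  define D where "D = ((\<lambda>i. hi i - h) ` {i\<in>?N. hi i > h}) \<union> ((\<lambda>i. lo i - h) ` {i\<in>?N. lo i > h})"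
  have finD: "finite D" using fin by (auto simp: D_def)
  have posD: "\<forall>d\<in>D. d > 0" by (auto simp: D_def)
  define \<delta> where "\<delta> = (if D = {} then 1 else Min D / 2)"
  have \<delta>pos: "\<delta> > 0"
    using finD posD by (auto simp: \<delta>_def)
  have \<delta>lt: "\<forall>d\<in>D. \<delta> < d"
  proof
    fix d assume d: "d \<in> D"
    then have "Min D \<le> d" "Min D > 0" using finD posD by (auto, metis Min_in empty_iff)
    then show "\<delta> < d" using d by (auto simp: \<delta>_def)
  qed
  have key: "indicator (F i) h - indicator (F i) (h + \<delta>) = (if F i \<noteq> {} \<and> hi i = h then 1 else (0::int))"
    if iI: "i \<in> I" for i
  proof (cases "F i = {}")
    case True then show ?thesis by simp
  next
    case False
    with iv[OF iI] have lh: "lo i \<le> hi i" and Fi: "F i = {lo i..hi i}" by auto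
    consider "hi i = h" | "hi i < h" | "hi i > h" by linarith
    then show ?thesis
    proof cases
      case 1 then show ?thesis using lh Fi \<delta>pos False by (simp add: indicator_def)
    next
      case 2 then show ?thesis using Fi \<delta>pos by (simp add: indicator_def)
    next
      case 3
      have "hi i - h \<in> D" using 3 False iI by (auto simp: D_def)
      hence d1: "\<delta> < hi i - h" using \<delta>lt by auto
      show ?thesis
      proof (cases "lo i > h")
        case True
        hence "lo i - h \<in> D" using False iI by (auto simp: D_def)
        hence "\<delta> < lo i - h" using \<delta>lt by auto
        then show ?thesis using True 3 Fi by (simp add: indicator_def)
      next
        case False2: False
        then show ?thesis using d1 3 Fi \<delta>pos by (simp add: indicator_def)
      qed
    qed
  qed
  have "0 = (\<Sum>i\<in>I. a i * indicator (F i) h) - (\<Sum>i\<in>I. a i * indicator (F i) (h+\<delta>))"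
    using rel by simp
  also have "\<dots> = (\<Sum>i\<in>I. a i * (indicator (F i) h - indicator (F i) (h+\<delta>)))"
    by (simp add: sum_subtractf right_diff_distrib)
  also have "\<dots> = (\<Sum>i\<in>I. if F i \<noteq> {} \<and> hi i = h then a i else 0)"
    using key by (intro sum.cong) auto
  also have "\<dots> = (\<Sum>i\<in>{i\<in>I. F i \<noteq> {} \<and> hi i = h}. a i)"
    using fin by (simp add: sum.inter_filter)
  finally show ?thesis by simp
qed

lemma oneD_ne:
  fixes I :: "'i set" and a :: "'i \<Rightarrow> int" and F :: "'i \<Rightarrow> real set" and lo hi :: "'i \<Rightarrow> real"
  assumes fin: "finite I"
    and iv: "\<And>i. i \<in> I \<Longrightarrow> F i \<noteq> {} \<Longrightarrow> lo i \<le> hi i \<and> F i = {lo i..hi i}"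
    and rel: "\<And>t. (\<Sum>i\<in>I. a i * indicator (F i) t) = 0"
  shows "(\<Sum>i\<in>{i\<in>I. F i \<noteq> {}}. a i) = 0"
proof -
  let ?N = "{i\<in>I. F i \<noteq> {}}"
  have "(\<Sum>i\<in>?N. a i) = (\<Sum>y\<in>hi ` ?N. \<Sum>i\<in>{x\<in>?N. hi x = y}. a i)"
    using fin by (intro sum.group[symmetric]) auto
  also have "\<dots> = 0"
  proof (rule sum.neutral, rule ballI)
    fix y
    have "{x\<in>?N. hi x = y} = {i\<in>I. F i \<noteq> {} \<and> hi i = y}" by auto
    then show "(\<Sum>i\<in>{x\<in>?N. hi x = y}. a i) = 0" using oneD[OF fin iv rel] by simp
  qed
  finally show ?thesis .
qed



definition cvx :: "(nat \<Rightarrow> real) set \<Rightarrow> bool" where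
  "cvx P \<longleftrightarrow> (\<forall>x\<in>P. \<forall>y\<in>P. \<forall>u::real. 0 \<le> u \<and> u \<le> 1 \<longrightarrow> (\<lambda>j. (1-u) * x j + u * y j) \<in> P)"

lemma fiber_interval:
  fixes Q :: "(nat \<Rightarrow> real) set" and y :: "nat \<Rightarrow> real" and k :: nat
  assumes cQ: "compact Q" and vQ: "cvx Q"
  defines "F \<equiv> {t. y(k:=t) \<in> Q}"
  shows "F = {} \<or> (Inf F \<le> Sup F \<and> F = {Inf F..Sup F})"
proof -
  let ?g = "\<lambda>t::real. y(k:=t)"
  have cont: "continuous_on UNIV ?g"
  proof (intro continuous_on_coordinatewise_then_product)
    fix i show "continuous_on UNIV (\<lambda>t. (y(k:=t)) i)"
      by (cases "i = k") auto
  qed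
  have "closed Q" using cQ by (simp add: compact_imp_closed)
  then have clF: "closed F" unfolding F_def
  proof -
    have "\<And>t. isCont ?g t" using cont by (simp add: continuous_on_eq_continuous_at)
    from continuous_closed_vimage[OF \<open>closed Q\<close> this] show "closed {t. y(k:=t) \<in> Q}"
      by (simp add: vimage_def)
  qed
  have "compact ((\<lambda>x. x k) ` Q)"
    by (rule compact_continuous_image[OF continuous_on_subset[OF continuous_on_product_coordinates subset_UNIV] cQ])
  then have "bounded ((\<lambda>x. x k) ` Q)" by (rule compact_imp_bounded)
  moreover have "F \<subseteq> (\<lambda>x. x k) ` Q" unfolding F_def
    by (auto intro!: image_eqI[where x="y(k:=_)"])
  ultimately have "bounded F" by (rule bounded_subset)
  with clF have cF: "compact F" by (simp add: compact_eq_bounded_closed)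
  have "convex F"
  proof (rule convexI)
    fix s t :: real and u v :: real
    assume s: "s \<in> F" and t: "t \<in> F" and uv0: "0 \<le> u" "0 \<le> v" "u + v = 1"
    then have uv: "0 \<le> u \<and> 0 \<le> v \<and> u + v = 1" by simp
    have eq: "y(k := u * s + v * t) = (\<lambda>j. (1-v) * (y(k:=s)) j + v * (y(k:=t)) j)"
    proof
      fix j show "(y(k := u * s + v * t)) j = (1-v) * (y(k:=s)) j + v * (y(k:=t)) j"
      proof -
        have u1: "u = 1 - v" using uv by simp
        show ?thesis by (cases "j = k") (simp_all add: u1 algebra_simps)
      qed
    qed
    have v1: "0 \<le> v \<and> v \<le> 1" using uv by simp
    have y1: "y(k:=s) \<in> Q" "y(k:=t) \<in> Q" using s t by (simp_all add: F_def)
    from vQ y1 v1 have "(\<lambda>j. (1-v) * (y(k:=s)) j + v * (y(k:=t)) j) \<in> Q"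
      unfolding cvx_def by blast
    then show "u *\<^sub>R s + v *\<^sub>R t \<in> F" unfolding F_def using eq by simp
  qed
  then have "connected F" by (rule convex_connected)
  with cF obtain a b where ab: "F = {a..b}" using connected_compact_interval_1 by blast
  show ?thesis
  proof (cases "F = {}")
    case False
    then have "a \<le> b" using ab by auto
    then show ?thesis using ab by simp
  qed simp
qed

definition pr :: "nat \<Rightarrow> (nat \<Rightarrow> real) \<Rightarrow> (nat \<Rightarrow> real)" where "pr k x = x(k := 0)"

lemma good_pr:
  assumes "compact P" "cvx P"
  shows "compact (pr k ` P) \<and> cvx (pr k ` P)"
proof
  have "continuous_on UNIV (pr k)"
  proof (intro continuous_on_coordinatewise_then_product)
    fix i show "continuous_on UNIV (\<lambda>x. pr k x i)"
      by (cases "i = k") (auto simp: pr_def)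
  qed
  then show "compact (pr k ` P)"
    by (rule compact_continuous_image[OF continuous_on_subset[OF _ subset_UNIV] assms(1)])
  show "cvx (pr k ` P)" unfolding cvx_def
  proof (intro ballI allI impI)
    fix x y u assume x: "x \<in> pr k ` P" and y: "y \<in> pr k ` P" and u: "0 \<le> (u::real) \<and> u \<le> 1"
    from x obtain x' where x': "x' \<in> P" "x = pr k x'" by auto
    from y obtain y' where y': "y' \<in> P" "y = pr k y'" by auto
    have "(\<lambda>j. (1-u) * x' j + u * y' j) \<in> P" using x' y' u assms(2) by (auto simp: cvx_def)
    moreover have "(\<lambda>j. (1-u) * x j + u * y j) = pr k (\<lambda>j. (1-u) * x' j + u * y' j)"
      using x' y' by (auto simp: pr_def fun_eq_iff)
    ultimately show "(\<lambda>j. (1-u) * x j + u * y j) \<in> pr k ` P" by auto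
  qed
qed

lemma rel_pr:
  fixes a :: "'i \<Rightarrow> int"
  assumes fin: "finite I" and good: "\<And>i. i \<in> I \<Longrightarrow> compact (P i) \<and> cvx (P i)"
    and rel: "\<And>x. (\<Sum>i\<in>I. a i * indicator (P i) x) = 0"
  shows "(\<Sum>i\<in>I. a i * indicator (pr k ` P i) y) = 0"
proof (cases "y k = 0")
  case False
  then have "\<And>i. y \<notin> pr k ` P i" by (auto simp: pr_def)
  then show ?thesis by simp
next
  case True
  define F where "F i = {t. y(k:=t) \<in> P i}" for i
  have mem: "y \<in> pr k ` P i \<longleftrightarrow> F i \<noteq> {}" for i
  proof
    assume "y \<in> pr k ` P i"
    then obtain x where x: "x \<in> P i" "y = x(k:=0)" by (auto simp: pr_def)
    then have "y(k := x k) = x" by auto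
    with x show "F i \<noteq> {}" by (auto simp: F_def intro!: exI[of _ "x k"])
  next
    assume "F i \<noteq> {}"
    then obtain t where "y(k:=t) \<in> P i" by (auto simp: F_def)
    moreover have "pr k (y(k:=t)) = y" using True by (auto simp: pr_def)
    ultimately show "y \<in> pr k ` P i" by (metis image_eqI)
  qed
  have iv: "F i \<noteq> {} \<Longrightarrow> Inf (F i) \<le> Sup (F i) \<and> F i = {Inf (F i)..Sup (F i)}" if "i \<in> I" for i
    using fiber_interval[of "P i" y k] good[OF that] by (auto simp: F_def)
  have relF: "(\<Sum>i\<in>I. a i * indicator (F i) t) = 0" for t
    using rel[of "y(k:=t)"] by (simp add: F_def indicator_def)
  have "(\<Sum>i\<in>{i\<in>I. F i \<noteq> {}}. a i) = 0"
    by (rule oneD_ne[OF fin iv relF])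
  moreover have "(\<Sum>i\<in>I. a i * indicator (pr k ` P i) y) = (\<Sum>i\<in>{i\<in>I. F i \<noteq> {}}. a i)"
    using fin by (simp add: sum.inter_filter[symmetric] mem indicator_def Int_def)
  ultimately show ?thesis by simp
qed

definition prK :: "nat set \<Rightarrow> (nat \<Rightarrow> real) \<Rightarrow> (nat \<Rightarrow> real)" where
  "prK K x = (\<lambda>j. if j \<in> K then 0 else x j)"

lemma rel_prK:
  fixes a :: "'i \<Rightarrow> int"
  assumes K: "finite K" and fin: "finite I" and good: "\<And>i. i \<in> I \<Longrightarrow> compact (P i) \<and> cvx (P i)"
    and rel: "\<And>x. (\<Sum>i\<in>I. a i * indicator (P i) x) = 0"
  shows "(\<forall>i\<in>I. compact (prK K ` P i) \<and> cvx (prK K ` P i)) \<and>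
         (\<forall>y. (\<Sum>i\<in>I. a i * indicator (prK K ` P i) y) = 0)"
  using K
proof (induction K rule: finite_induct)
  case empty
  have "prK {} ` P i = P i" for i by (simp add: prK_def)
  then show ?case using good rel by simp
next
  case (insert k K)
  have eq: "prK (insert k K) ` P i = pr k ` (prK K ` P i)" for i
    unfolding image_image by (intro image_cong) (auto simp: prK_def pr_def fun_eq_iff)
  show ?case unfolding eq
  proof
    show "\<forall>i\<in>I. compact (pr k ` prK K ` P i) \<and> cvx (pr k ` prK K ` P i)"
      using insert.IH good_pr by blast
    show "\<forall>y. (\<Sum>i\<in>I. a i * indicator (pr k ` prK K ` P i) y) = 0"
      using rel_pr[OF fin, of "\<lambda>i. prK K ` P i" a] insert.IH by blast
  qed
qed

definition shear :: "nat \<Rightarrow> (nat \<Rightarrow> real) \<Rightarrow> nat \<Rightarrow> (nat \<Rightarrow> real) \<Rightarrow> (nat \<Rightarrow> real)" where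
  "shear c W N x = x(c := x c + (\<Sum>j\<le>N. W j * x j))"

lemma good_shear:
  assumes "compact P" "cvx P"
  shows "compact (shear c W N ` P) \<and> cvx (shear c W N ` P)"
proof
  have "continuous_on UNIV (shear c W N)"
  proof (intro continuous_on_coordinatewise_then_product)
    fix i show "continuous_on UNIV (\<lambda>x. shear c W N x i)"
      by (cases "i = c") (auto simp: shear_def intro!: continuous_intros)
  qed
  then show "compact (shear c W N ` P)"
    by (rule compact_continuous_image[OF continuous_on_subset[OF _ subset_UNIV] assms(1)])
  show "cvx (shear c W N ` P)" unfolding cvx_def
  proof (intro ballI allI impI)
    fix x y u assume x: "x \<in> shear c W N ` P" and y: "y \<in> shear c W N ` P" and u: "0 \<le> (u::real) \<and> u \<le> 1"
    from x obtain x' where x': "x' \<in> P" "x = shear c W N x'" by auto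
    from y obtain y' where y': "y' \<in> P" "y = shear c W N y'" by auto
    have "(\<lambda>j. (1-u) * x' j + u * y' j) \<in> P" using x' y' u assms(2) by (auto simp: cvx_def)
    moreover have S: "(\<Sum>j\<le>N. W j * ((1-u) * x' j + u * y' j)) = (1-u) * (\<Sum>j\<le>N. W j * x' j) + u * (\<Sum>j\<le>N. W j * y' j)"
      by (simp add: sum.distrib sum_distrib_left sum_subtractf algebra_simps)
    moreover have "(\<lambda>j. (1-u) * x j + u * y j) = shear c W N (\<lambda>j. (1-u) * x' j + u * y' j)"
    proof (rule ext)
      fix j show "(1-u) * x j + u * y j = shear c W N (\<lambda>j. (1-u) * x' j + u * y' j) j"
      proof (cases "j = c")
        case True
        then show ?thesis unfolding x'(2) y'(2) shear_def
          by (simp only: fun_upd_same S) (simp add: algebra_simps)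
      next
        case False
        then show ?thesis unfolding x'(2) y'(2) shear_def by simp
      qed
    qed
    ultimately show "(\<lambda>j. (1-u) * x j + u * y j) \<in> shear c W N ` P" by auto
  qed
qed

lemma rel_shear:
  fixes a :: "'i \<Rightarrow> int"
  assumes c: "N < c"
    and rel: "\<And>x. (\<Sum>i\<in>I. a i * indicator (P i) x) = 0"
  shows "(\<Sum>i\<in>I. a i * indicator (shear c W N ` P i) z) = 0"
proof -
  define z' where "z' = z(c := z c - (\<Sum>j\<le>N. W j * z j))"
  have s: "(\<Sum>j\<le>N. W j * (x(c:=v)) j) = (\<Sum>j\<le>N. W j * x j)" for x v
    using c by (intro sum.cong) auto
  have inv1: "shear c W N z' = z" unfolding z'_def shear_def using s by (auto simp: fun_eq_iff)
  have inv2: "x = z'" if h: "shear c W N x = z" for x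
  proof -
    have zx: "z = x(c := x c + (\<Sum>j\<le>N. W j * x j))" using h by (simp add: shear_def)
    have "(\<Sum>j\<le>N. W j * z j) = (\<Sum>j\<le>N. W j * x j)" unfolding zx by (rule s)
    then show ?thesis unfolding z'_def using zx by (auto simp: fun_eq_iff)
  qed
  have "z \<in> shear c W N ` P i \<longleftrightarrow> z' \<in> P i" for i
    using inv1 inv2 by (metis image_iff)
  then show ?thesis using rel[of z'] by (simp add: indicator_def)
qed



lemma bp_zero: "x \<in> base_polytope M \<Longrightarrow> \<forall>B\<in>M. B \<subseteq> {..n} \<Longrightarrow> n < j \<Longrightarrow> x j = 0"
  unfolding base_polytope_def
proof clarify
  fix w :: "nat set \<Rightarrow> real" assume "\<forall>B\<in>M. B \<subseteq> {..n}" "n < j"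
  then have "\<forall>B\<in>M. j \<notin> B" by (meson atMost_iff not_le subsetD)
  then show "(\<Sum>B\<in>M. w B * (if j \<in> B then 1 else 0)) = 0" by (intro sum.neutral) auto
qed

lemma bp_cvx: "cvx (base_polytope M)"
  unfolding cvx_def
proof (intro ballI allI impI)
  fix x y u assume x: "x \<in> base_polytope M" and y: "y \<in> base_polytope M" and u: "0 \<le> (u::real) \<and> u \<le> 1"
  from x obtain w1 where w1: "\<forall>B\<in>M. 0 \<le> w1 B" "(\<Sum>B\<in>M. w1 B) = 1"
    "x = (\<lambda>j. \<Sum>B\<in>M. w1 B * (if j \<in> B then 1 else 0))" by (auto simp: base_polytope_def)
  from y obtain w2 where w2: "\<forall>B\<in>M. 0 \<le> w2 B" "(\<Sum>B\<in>M. w2 B) = 1"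
    "y = (\<lambda>j. \<Sum>B\<in>M. w2 B * (if j \<in> B then 1 else 0))" by (auto simp: base_polytope_def)
  define w where "w B = (1-u) * w1 B + u * w2 B" for B
  have "\<forall>B\<in>M. 0 \<le> w B" using w1 w2 u by (auto simp: w_def)
  moreover have "(\<Sum>B\<in>M. w B) = 1"
    using w1 w2 by (simp add: w_def sum.distrib sum_distrib_left[symmetric])
  moreover have "(\<lambda>j. (1-u) * x j + u * y j) = (\<lambda>j. \<Sum>B\<in>M. w B * (if j \<in> B then 1 else 0))"
    by (simp add: w1(3) w2(3) w_def distrib_right mult.assoc sum.distrib sum_distrib_left)
  ultimately show "(\<lambda>j. (1-u) * x j + u * y j) \<in> base_polytope M"
    unfolding base_polytope_def by blast
qed

lemma bp_compact:
  assumes fin: "finite M"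
  shows "compact (base_polytope M)"
proof -
  define S where "S = (Pi UNIV (\<lambda>B. if B \<in> M then {0..1::real} else {0})) \<inter> {w. (\<Sum>B\<in>M. w B) = 1}"
  have c1: "compact (Pi UNIV (\<lambda>B. if B \<in> M then {0..1::real} else {0}))"
  proof -
    have "compactin (product_topology (\<lambda>_. euclidean) UNIV) (PiE UNIV (\<lambda>B. if B \<in> M then {0..1::real} else {0}))"
      by (subst compactin_PiE) auto
    then show ?thesis by (simp add: euclidean_product_topology PiE_UNIV_domain)
  qed
  have c2: "closed {w :: nat set \<Rightarrow> real. (\<Sum>B\<in>M. w B) = 1}"
    by (intro closed_Collect_eq continuous_intros continuous_on_sum) (simp_all add: continuous_on_product_coordinates)
  have cS: "compact S" unfolding S_def using c1 c2 by (rule compact_Int_closed)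
  define f where "f w = (\<lambda>j. \<Sum>B\<in>M. w B * (if j \<in> B then 1 else (0::real)))" for w :: "nat set \<Rightarrow> real"
  have cf: "continuous_on UNIV f"
    unfolding f_def
    by (intro continuous_on_coordinatewise_then_product continuous_on_sum continuous_intros)
       (simp add: continuous_on_product_coordinates)
  have eq: "base_polytope M = f ` S"
  proof
    show "base_polytope M \<subseteq> f ` S"
    proof
      fix x assume "x \<in> base_polytope M"
      then obtain w where w: "\<forall>B\<in>M. 0 \<le> w B" "(\<Sum>B\<in>M. w B) = 1"
        "x = (\<lambda>j. \<Sum>B\<in>M. w B * (if j \<in> B then 1 else 0))" by (auto simp: base_polytope_def)
      define w' where "w' B = (if B \<in> M then w B else 0)" for B
      have le1: "w B \<le> 1" if "B \<in> M" for B
        using member_le_sum[of B M w] w that fin by auto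
      have "w' \<in> S" using w le1 by (auto simp: S_def w'_def)
      moreover have "x = f w'" using w by (auto simp: f_def w'_def fun_eq_iff intro!: sum.cong)
      ultimately show "x \<in> f ` S" by blast
    qed
    show "f ` S \<subseteq> base_polytope M"
    proof
      fix x assume "x \<in> f ` S"
      then obtain w where w: "w \<in> S" "x = f w" by auto
      then have "\<forall>B\<in>M. 0 \<le> w B" "(\<Sum>B\<in>M. w B) = 1"
        by (auto simp: S_def Pi_iff) (metis atLeastAtMost_iff)
      then show "x \<in> base_polytope M" unfolding base_polytope_def w(2) f_def by blast
    qed
  qed
  show ?thesis unfolding eq
    by (rule compact_continuous_image[OF continuous_on_subset[OF cf subset_UNIV] cS])
qed



definition val :: "(nat \<Rightarrow> nat) \<Rightarrow> nat set \<Rightarrow> real" where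
  "val \<sigma> B = (\<Sum>j\<in>B. (1/2::real)^(inv \<sigma> j))"

lemma geom_tail:
  assumes "finite S" "\<forall>p\<in>S. x < p"
  shows "(\<Sum>p\<in>S. (1/2::real)^p) < (1/2)^x"
proof -
  have gs: "(\<Sum>p\<in>{Suc x..<Suc x + N}. (1/2::real)^p) = (1/2)^x - (1/2)^(x+N)" for N
  proof (induction N)
    case (Suc N)
    have "{Suc x..<Suc x + Suc N} = insert (Suc x + N) {Suc x..<Suc x + N}" by auto
    then have "(\<Sum>p\<in>{Suc x..<Suc x + Suc N}. (1/2::real)^p) = (1/2)^(Suc x + N) + (1/2)^x - (1/2)^(x+N)"
      using Suc by simp
    then show ?case by simp
  qed simp
  define N where "N = (if S = {} then 0 else Max S)"
  have sub: "S \<subseteq> {Suc x..<Suc x + N}"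
  proof
    fix p assume p: "p \<in> S"
    then have "p \<le> Max S" using assms(1) by simp
    then show "p \<in> {Suc x..<Suc x + N}" using p assms(2) by (auto simp: N_def)
  qed
  have "(\<Sum>p\<in>S. (1/2::real)^p) \<le> (\<Sum>p\<in>{Suc x..<Suc x + N}. (1/2::real)^p)"
    by (rule sum_mono2[OF _ sub]) auto
  also have "\<dots> < (1/2)^x" unfolding gs by simp
  finally show ?thesis .
qed


lemma lex_val:
  "sorted L \<Longrightarrow> distinct L \<Longrightarrow> sorted L' \<Longrightarrow> distinct L' \<Longrightarrow> (L, L') \<in> lexord {(i,j). i < j} \<Longrightarrow>
   set L \<subset> set L' \<or> (\<Sum>p\<in>set L'. (1/2::real)^p) < (\<Sum>p\<in>set L. (1/2::real)^p)"
proof (induction L arbitrary: L')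
  case Nil
  then obtain y ys where "L' = y # ys" by (cases L') auto
  then show ?case by auto
next
  case (Cons x xs)
  obtain y ys where L': "L' = y # ys" using Cons.prems(5) by (cases L') auto
  have lx: "x < y \<or> (x = y \<and> (xs, ys) \<in> lexord {(i,j). i < j})"
    using Cons.prems(5) L' by simp
  show ?case
  proof (cases "x < y")
    case True
    have "\<forall>p\<in>set ys. y \<le> p" using Cons.prems(3) L' by simp
    then have "\<forall>p\<in>set L'. x < p" using True L' by auto
    then have "(\<Sum>p\<in>set L'. (1/2::real)^p) < (1/2)^x" by (intro geom_tail) auto
    also have "\<dots> \<le> (\<Sum>p\<in>set (x#xs). (1/2::real)^p)"
      by (rule member_le_sum) auto
    finally show ?thesis by simp
  next
    case False
    with lx have xy: "x = y" and lt: "(xs, ys) \<in> lexord {(i,j). i < j}" by auto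
    have pr: "sorted xs" "distinct xs" "sorted ys" "distinct ys"
      using Cons.prems L' by auto
    have IH: "set xs \<subset> set ys \<or> (\<Sum>p\<in>set ys. (1/2::real)^p) < (\<Sum>p\<in>set xs. (1/2::real)^p)"
      by (rule Cons.IH[OF pr lt])
    have nx: "x \<notin> set xs" "x \<notin> set ys" using Cons.prems L' xy by auto
    have s1: "(\<Sum>p\<in>set (x#xs). (1/2::real)^p) = (1/2)^x + (\<Sum>p\<in>set xs. (1/2::real)^p)"
      using nx by simp
    have s2: "(\<Sum>p\<in>set L'. (1/2::real)^p) = (1/2)^x + (\<Sum>p\<in>set ys. (1/2::real)^p)"
      using nx L' xy by simp
    from IH show ?thesis
    proof
      assume "set xs \<subset> set ys"
      then have "set (x#xs) \<subset> set L'" using nx L' xy by auto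
      then show ?thesis by blast
    next
      assume "(\<Sum>p\<in>set ys. (1/2::real)^p) < (\<Sum>p\<in>set xs. (1/2::real)^p)"
      then show ?thesis using s1 s2 by simp
    qed
  qed
qed



lemma sp_props:
  assumes "bij \<sigma>" "finite B"
  shows "sorted (sorted_positions \<sigma> B)" "distinct (sorted_positions \<sigma> B)"
    "set (sorted_positions \<sigma> B) = inv \<sigma> ` B"
    "(\<Sum>p\<in>set (sorted_positions \<sigma> B). (1/2::real)^p) = val \<sigma> B"
proof -
  show "sorted (sorted_positions \<sigma> B)" "distinct (sorted_positions \<sigma> B)"
    "set (sorted_positions \<sigma> B) = inv \<sigma> ` B"
    using assms by (auto simp: sorted_positions_def)
  have inj: "inj (inv \<sigma>)" using assms(1) bij_betw_def bij_imp_bij_inv by blast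
  show "(\<Sum>p\<in>set (sorted_positions \<sigma> B). (1/2::real)^p) = val \<sigma> B"
    using assms by (simp add: sorted_positions_def val_def sum.reindex[OF inj_on_subset[OF inj subset_UNIV]])
qed

lemma inv_img_inj: "bij \<sigma> \<Longrightarrow> inj (inv \<sigma>)"
  using bij_betw_def bij_imp_bij_inv by blast

lemma lex_cmp:
  assumes "bij \<sigma>" "finite B" "finite B'"
    "(sorted_positions \<sigma> B, sorted_positions \<sigma> B') \<in> lexord {(i,j). i<j}"
  shows "B \<subset> B' \<or> val \<sigma> B' < val \<sigma> B"
proof -
  have "set (sorted_positions \<sigma> B) \<subset> set (sorted_positions \<sigma> B') \<or>
      (\<Sum>p\<in>set (sorted_positions \<sigma> B'). (1/2::real)^p) < (\<Sum>p\<in>set (sorted_positions \<sigma> B). (1/2::real)^p)"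
    by (rule lex_val[OF sp_props(1,2)[OF assms(1,2)] sp_props(1,2)[OF assms(1,3)] assms(4)])
  then have "inv \<sigma> ` B \<subset> inv \<sigma> ` B' \<or> val \<sigma> B' < val \<sigma> B"
    using sp_props[OF assms(1)] assms(2,3) by simp
  moreover have "inv \<sigma> ` B \<subset> inv \<sigma> ` B' \<Longrightarrow> B \<subset> B'"
    using inv_img_inj[OF assms(1)] by (auto simp: inj_image_subset_iff inj_image_eq_iff psubset_eq)
  ultimately show ?thesis by blast
qed

lemma val_strict_mono:
  assumes "finite B'" "B \<subset> B'"
  shows "val \<sigma> B < val \<sigma> B'"
proof -
  have "val \<sigma> B' = (\<Sum>j\<in>B'-B. (1/2::real)^(inv \<sigma> j)) + val \<sigma> B"
    unfolding val_def using assms by (intro sum.subset_diff) auto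
  moreover have "(\<Sum>j\<in>B'-B. (1/2::real)^(inv \<sigma> j)) > 0"
    using assms by (intro sum_pos) auto
  ultimately show ?thesis by simp
qed

lemma sp_inj:
  assumes "bij \<sigma>" "finite B" "finite B'" "sorted_positions \<sigma> B = sorted_positions \<sigma> B'"
  shows "B = B'"
proof -
  have "inv \<sigma> ` B = inv \<sigma> ` B'" using sp_props(3)[OF assms(1,2)] sp_props(3)[OF assms(1,3)] assms(4) by simp
  then show ?thesis using inv_img_inj[OF assms(1)] by (simp add: inj_image_eq_iff)
qed

lemma lex_total: "xs \<noteq> ys \<Longrightarrow> (xs, ys) \<in> lexord {(i::nat,j). i<j} \<or> (ys, xs) \<in> lexord {(i,j). i<j}"
proof -
  have "\<forall>a b. (a, b) \<in> {(i::nat,j). i<j} \<or> a = b \<or> (b, a) \<in> {(i::nat,j). i<j}" by auto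
  from lexord_linear[OF this, of xs ys] show "xs \<noteq> ys \<Longrightarrow> ?thesis" by blast
qed

lemma val_inj:
  assumes "bij \<sigma>" "finite B" "finite B'" "val \<sigma> B = val \<sigma> B'"
  shows "B = B'"
proof (rule ccontr)
  assume ne: "B \<noteq> B'"
  then have "sorted_positions \<sigma> B \<noteq> sorted_positions \<sigma> B'" using sp_inj assms by blast
  then consider "(sorted_positions \<sigma> B, sorted_positions \<sigma> B') \<in> lexord {(i,j). i<j}"
    | "(sorted_positions \<sigma> B', sorted_positions \<sigma> B) \<in> lexord {(i,j). i<j}" using lex_total by blast
  then show False
  proof cases
    case 1
    from lex_cmp[OF assms(1-3) 1] show False
      using val_strict_mono[OF assms(3), of B \<sigma>] assms(4) by auto
  next
    case 2
    from lex_cmp[OF assms(1) assms(3) assms(2) 2] show False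
      using val_strict_mono[OF assms(2), of B' \<sigma>] assms(4) by auto
  qed
qed

lemma antichain:
  assumes "matroid_on E M" "B1 \<in> M" "B2 \<in> M" "B1 \<subseteq> B2"
  shows "B1 = B2"
proof (rule ccontr)
  assume "B1 \<noteq> B2"
  then obtain x where "x \<in> B2 - B1" using assms(4) by blast
  then obtain y where "y \<in> B1 - B2" using assms unfolding matroid_on_def by blast
  then show False using assms(4) by blast
qed

lemma lfb_char:
  assumes M: "matroid_on {..n} M" and \<sigma>: "\<sigma> permutes {..n}"
  shows "lex_first_basis M \<sigma> \<in> M \<and> (\<forall>B\<in>M. val \<sigma> B \<le> val \<sigma> (lex_first_basis M \<sigma>))"
proof -
  have bij: "bij \<sigma>" using \<sigma> by (rule permutes_bij)
  have sub: "\<forall>B\<in>M. B \<subseteq> {..n}" "M \<noteq> {}" using M by (auto simp: matroid_on_def)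
  have finB: "finite B" if "B \<in> M" for B using sub that finite_subset by blast
  have finM: "finite M" using sub by (meson PowI finite_Pow_iff finite_atMost finite_subset subsetI)
  define v where "v = Max (val \<sigma> ` M)"
  have "v \<in> val \<sigma> ` M" unfolding v_def using finM sub(2) by (intro Max_in) auto
  then obtain B0 where B0: "B0 \<in> M" "val \<sigma> B0 = v" by auto
  have mx: "val \<sigma> B \<le> val \<sigma> B0" if "B \<in> M" for B
    using B0 finM that by (auto simp: v_def)
  let ?R = "{(i::nat, j). i < j}"
  let ?P = "\<lambda>B. B \<in> M \<and> (\<forall>B'\<in>M. B' \<noteq> B \<longrightarrow> (sorted_positions \<sigma> B, sorted_positions \<sigma> B') \<in> lexord ?R)"
  have PB0: "?P B0"
  proof (intro conjI ballI impI)
    show "B0 \<in> M" by fact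
    fix B' assume B': "B' \<in> M" "B' \<noteq> B0"
    then have "sorted_positions \<sigma> B0 \<noteq> sorted_positions \<sigma> B'"
      using sp_inj[OF bij finB[OF B0(1)] finB[OF B'(1)]] by auto
    moreover have "(sorted_positions \<sigma> B', sorted_positions \<sigma> B0) \<notin> lexord ?R"
    proof
      assume "(sorted_positions \<sigma> B', sorted_positions \<sigma> B0) \<in> lexord ?R"
      from lex_cmp[OF bij finB[OF B'(1)] finB[OF B0(1)] this]
      show False using antichain[OF M B'(1) B0(1)] B' mx[OF B'(1)] by auto
    qed
    ultimately show "(sorted_positions \<sigma> B0, sorted_positions \<sigma> B') \<in> lexord ?R"
      using lex_total by blast
  qed
  have uniq: "B = B0" if PB: "?P B" for B
  proof (rule ccontr)
    assume ne: "B \<noteq> B0"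
    with PB B0 have "(sorted_positions \<sigma> B, sorted_positions \<sigma> B0) \<in> lexord ?R" by auto
    from lex_cmp[OF bij finB[OF conjunct1[OF PB]] finB[OF B0(1)] this]
    show False using antichain[OF M conjunct1[OF PB] B0(1)] ne mx[OF conjunct1[OF PB]] by auto
  qed
  have "lex_first_basis M \<sigma> = B0"
    unfolding lex_first_basis_def using PB0 uniq by (rule the_equality)
  then show ?thesis using B0 mx by simp
qed



lemma core:
  assumes mats: "\<forall>M\<in>set Ms. matroid_on {..n} M"
    and rel: "\<forall>x. (\<Sum>i<length Ms. a ! i * indicator (base_polytope (Ms ! i)) x) = (0::int)"
    and \<sigma>: "\<sigma> permutes {..n}"
  shows "(\<Sum>i\<in>{i\<in>{..<length Ms}. val \<sigma> (lex_first_basis (Ms!i) \<sigma>) = h}. a!i) = 0"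
proof -
  let ?I = "{..<length Ms}"
  define c where "c = Suc n"
  define W where "W j = (1/2::real)^(inv \<sigma> j)" for j
  define ell where "ell x = (\<Sum>j\<le>n. W j * x j)" for x :: "nat \<Rightarrow> real"
  define P where "P i = base_polytope (Ms!i)" for i
  define Q where "Q i = prK {..n} ` shear c W n ` P i" for i
  have Mi: "matroid_on {..n} (Ms!i)" if "i \<in> ?I" for i using mats that by auto
  have subM: "\<forall>B\<in>Ms!i. B \<subseteq> {..n}" if "i \<in> ?I" for i using Mi[OF that] by (auto simp: matroid_on_def)
  have finM: "finite (Ms!i)" if "i \<in> ?I" for i
    using subM[OF that] by (meson PowI finite_Pow_iff finite_atMost finite_subset subsetI)
  have goodP: "compact (P i) \<and> cvx (P i)" if "i \<in> ?I" for i
    using bp_compact[OF finM[OF that]] bp_cvx by (simp add: P_def)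
  have relP: "(\<Sum>i\<in>?I. a!i * indicator (P i) x) = 0" for x using rel by (simp add: P_def)
  have goodS: "compact (shear c W n ` P i) \<and> cvx (shear c W n ` P i)" if "i \<in> ?I" for i
    using goodP[OF that] good_shear by blast
  have relS: "(\<Sum>i\<in>?I. a!i * indicator (shear c W n ` P i) z) = 0" for z
    by (rule rel_shear) (use relP in \<open>auto simp: c_def\<close>)
  have QQ: "(\<forall>i\<in>?I. compact (Q i) \<and> cvx (Q i)) \<and> (\<forall>y. (\<Sum>i\<in>?I. a!i * indicator (Q i) y) = 0)"
    unfolding Q_def by (rule rel_prK[OF finite_atMost finite_lessThan goodS relS])
  define F where "F i = {t. (\<lambda>_. 0::real)(c := t) \<in> Q i}" for i
  have Fimg: "F i = ell ` P i" if iI: "i \<in> ?I" for i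
  proof -
    have key: "prK {..n} (shear c W n x) = (\<lambda>_. 0::real)(c := ell x)" if xP: "x \<in> P i" for x
    proof
      fix j
      have z: "n < j \<Longrightarrow> x j = 0" for j using bp_zero[of x "Ms!i" n j] xP subM[OF iI] by (simp add: P_def)
      show "prK {..n} (shear c W n x) j = ((\<lambda>_. 0::real)(c := ell x)) j"
        using z[of j] z[of c] by (auto simp: prK_def shear_def c_def ell_def)
    qed
    have "t \<in> F i \<longleftrightarrow> t \<in> ell ` P i" for t
    proof
      assume "t \<in> F i"
      then obtain x where x: "x \<in> P i" "(\<lambda>_. 0::real)(c := t) = prK {..n} (shear c W n x)"
        by (auto simp: F_def Q_def)
      then have "(\<lambda>_. 0::real)(c := t) = (\<lambda>_. 0::real)(c := ell x)" using key by simp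
      then have "t = ell x" by (metis fun_upd_same)
      then show "t \<in> ell ` P i" using x by auto
    next
      assume "t \<in> ell ` P i"
      then obtain x where x: "x \<in> P i" "t = ell x" by auto
      then have "(\<lambda>_. 0::real)(c := t) = prK {..n} (shear c W n x)" using key[OF x(1)] by simp
      then have "(\<lambda>_. 0::real)(c := t) \<in> prK {..n} ` shear c W n ` P i" using x(1) by blast
      then show "t \<in> F i" by (simp add: F_def Q_def)
    qed
    then show ?thesis by blast
  qed
  have iv: "F i \<noteq> {} \<Longrightarrow> Inf (F i) \<le> Sup (F i) \<and> F i = {Inf (F i)..Sup (F i)}" if "i \<in> ?I" for i
    using fiber_interval[of "Q i" "\<lambda>_. 0" c] QQ that by (auto simp: F_def)
  have relF: "(\<Sum>i\<in>?I. a!i * indicator (F i) t) = 0" for t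
    using QQ by (simp add: F_def indicator_def)
  have z: "(\<Sum>i\<in>{i\<in>?I. F i \<noteq> {} \<and> Sup (F i) = h}. a!i) = 0"
    by (rule oneD[OF finite_lessThan iv relF])
  have sup: "F i \<noteq> {} \<and> Sup (F i) = val \<sigma> (lex_first_basis (Ms!i) \<sigma>)" if iI: "i \<in> ?I" for i
  proof -
    define B0 where "B0 = lex_first_basis (Ms!i) \<sigma>"
    have B0: "B0 \<in> Ms!i" "\<forall>B\<in>Ms!i. val \<sigma> B \<le> val \<sigma> B0"
      using lfb_char[OF Mi[OF iI] \<sigma>] by (auto simp: B0_def)
    have lv: "ell (\<lambda>j. if j \<in> B then 1 else 0) = val \<sigma> B" if "B \<subseteq> {..n}" for B
    proof -
      have "ell (\<lambda>j. if j \<in> B then 1 else 0) = (\<Sum>j\<in>{..n}. if j \<in> B then W j else 0)"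
        unfolding ell_def by (rule sum.cong) auto
      also have "\<dots> = (\<Sum>j\<in>{..n} \<inter> B. W j)" by (simp add: sum.inter_restrict)
      also have "{..n} \<inter> B = B" using that by blast
      finally show ?thesis by (simp add: val_def W_def)
    qed
    have e0: "(\<lambda>j. if j \<in> B0 then 1 else 0) \<in> P i"
    proof -
      define w where "w B = (if B = B0 then 1 else (0::real))" for B
      have "(\<Sum>B\<in>Ms!i. w B) = 1" using B0(1) finM[OF iI] by (simp add: w_def)
      moreover have "(\<lambda>j. if j \<in> B0 then 1 else 0) = (\<lambda>j. \<Sum>B\<in>Ms!i. w B * (if j \<in> B then 1 else 0))"
        using B0(1) finM[OF iI] by (simp add: w_def fun_eq_iff if_distrib[of "\<lambda>x. x * _"] cong: if_cong)
      moreover have "\<forall>B\<in>Ms!i. 0 \<le> w B" by (simp add: w_def)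
      ultimately show ?thesis unfolding P_def base_polytope_def by blast
    qed
    have le: "ell x \<le> val \<sigma> B0" if "x \<in> P i" for x
    proof -
      from that obtain w where w: "\<forall>B\<in>Ms!i. 0 \<le> w B" "(\<Sum>B\<in>Ms!i. w B) = 1"
        "x = (\<lambda>j. \<Sum>B\<in>Ms!i. w B * (if j \<in> B then 1 else 0))" by (auto simp: P_def base_polytope_def)
      have "ell x = (\<Sum>j\<le>n. \<Sum>B\<in>Ms!i. W j * (w B * (if j \<in> B then 1 else 0)))"
        by (simp add: ell_def w(3) sum_distrib_left)
      also have "\<dots> = (\<Sum>B\<in>Ms!i. w B * ell (\<lambda>j. if j \<in> B then 1 else 0))"
        by (subst sum.swap) (simp add: ell_def sum_distrib_left algebra_simps)
      also have "\<dots> = (\<Sum>B\<in>Ms!i. w B * val \<sigma> B)"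
        using subM[OF iI] lv by (intro sum.cong) auto
      also have "\<dots> \<le> (\<Sum>B\<in>Ms!i. w B * val \<sigma> B0)"
        using w(1) B0(2) by (intro sum_mono mult_left_mono) auto
      also have "\<dots> = val \<sigma> B0" using w(2) by (simp add: sum_distrib_right[symmetric])
      finally show ?thesis .
    qed
    have "val \<sigma> B0 \<in> F i" unfolding Fimg[OF iI] using e0 lv[of B0] subM[OF iI] B0(1)
      by (metis image_eqI)
    moreover have "Sup (F i) = val \<sigma> B0"
      unfolding Fimg[OF iI] using \<open>val \<sigma> B0 \<in> F i\<close> le
      by (intro cSup_eq_maximum) (auto simp: Fimg[OF iI])
    ultimately show ?thesis by (auto simp: B0_def)
  qed
  have "{i\<in>?I. F i \<noteq> {} \<and> Sup (F i) = h} = {i\<in>?I. val \<sigma> (lex_first_basis (Ms!i) \<sigma>) = h}"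
    using sup by auto
  with z show ?thesis by simp
qed



lemma sum_fun_apply: "(\<Sum>i\<in>A. f i) x = (\<Sum>i\<in>A. f i x)"
  by (induction A rule: infinite_finite_induct) auto

lemma s_add: "(\<Sum>_<(p::nat)+q. x) = (\<Sum>_<p. x) + (\<Sum>_<q. (x::'g::ab_group_add))"
  by (induction q) (simp_all add: add.assoc)

lemma zs_alt: "zsmult k x = (\<Sum>_<nat k. x) - (\<Sum>_<nat (-k). x)"
  by (simp add: zsmult_def)

lemma zs_diff: "zsmult (int p - int q) (x::'g::ab_group_add) = (\<Sum>_<p. x) - (\<Sum>_<q. x)"
proof (cases "q \<le> p")
  case True
  then obtain d where d: "p = q + d" using le_Suc_ex by blast
  have "nat (int p - int q) = d" "nat (- (int p - int q)) = 0" using d by auto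
  then show ?thesis unfolding zs_alt d s_add by simp
next
  case False
  then obtain d where d: "q = p + d" by (metis le_Suc_ex nat_le_linear)
  have "nat (int p - int q) = 0" "nat (- (int p - int q)) = d" using d by auto
  then show ?thesis unfolding zs_alt d s_add by simp
qed

lemma zs_add: "zsmult (k + l) (x::'g::ab_group_add) = zsmult k x + zsmult l x"
proof -
  have eq: "k + l = int (nat k + nat l) - int (nat (-k) + nat (-l))" by simp
  have "zsmult (k + l) x = zsmult (int (nat k + nat l) - int (nat (-k) + nat (-l))) x"
    by (subst eq) (rule refl)
  also have "\<dots> = (\<Sum>_<nat k + nat l. x) - (\<Sum>_<nat (-k) + nat (-l). x)"
    by (rule zs_diff)
  finally have "zsmult (k + l) x = (\<Sum>_<nat k + nat l. x) - (\<Sum>_<nat (-k) + nat (-l). x)" .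
  then show ?thesis unfolding s_add zs_alt[of k] zs_alt[of l] by (simp add: algebra_simps)
qed

lemma zs_zero_left [simp]: "zsmult 0 x = 0" by (simp add: zsmult_def)
lemma zs_zero_right [simp]: "zsmult k (0::'g::ab_group_add) = 0" by (simp add: zsmult_def)

lemma zs_sum: "(\<Sum>i\<in>A. zsmult (f i) (x::'g::ab_group_add)) = zsmult (\<Sum>i\<in>A. f i) x"
  by (induction A rule: infinite_finite_induct) (simp_all add: zs_add)

lemma zs_apply: "zsmult k f y = zsmult k (f y)"
  by (simp add: zsmult_def sum_fun_apply)

lemma val_gen:
  fixes H :: "(nat \<Rightarrow> nat) \<Rightarrow> nat set \<Rightarrow> 'g::ab_group_add"
  shows "valuative n (\<lambda>M \<sigma>. if \<sigma> permutes {..n} then H \<sigma> (lex_first_basis M \<sigma>) else 0)"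
  unfolding valuative_def
proof (intro allI impI)
  fix Ms :: "nat set set list" and a :: "int list"
  assume len: "length a = length Ms" and mats: "\<forall>M\<in>set Ms. matroid_on {..n} M"
    and rel: "\<forall>x. (\<Sum>i<length Ms. a ! i * indicator (base_polytope (Ms ! i)) x) = (0::int)"
  let ?I = "{..<length Ms}"
  show "(\<Sum>i<length Ms. zsmult (a ! i) (\<lambda>\<sigma>. if \<sigma> permutes {..n} then H \<sigma> (lex_first_basis (Ms!i) \<sigma>) else 0)) = 0"
  proof
    fix \<sigma> :: "nat \<Rightarrow> nat"
    show "(\<Sum>i<length Ms. zsmult (a ! i) (\<lambda>\<sigma>. if \<sigma> permutes {..n} then H \<sigma> (lex_first_basis (Ms!i) \<sigma>) else 0)) \<sigma> = 0 \<sigma>"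
    proof (cases "\<sigma> permutes {..n}")
      case False
      then show ?thesis by (simp add: sum_fun_apply zs_apply)
    next
      case True
      define b where "b i = lex_first_basis (Ms!i) \<sigma>" for i
      have finb: "finite (b i)" if "i \<in> ?I" for i
      proof -
        have "matroid_on {..n} (Ms!i)" using mats that by auto
        then have "b i \<in> Ms!i" "\<forall>B\<in>Ms!i. B \<subseteq> {..n}"
          using lfb_char[OF _ True] by (auto simp: b_def matroid_on_def)
        then show ?thesis by (meson finite_atMost finite_subset)
      qed
      have bij: "bij \<sigma>" using True by (rule permutes_bij)
      have "(\<Sum>i<length Ms. zsmult (a ! i) (\<lambda>\<sigma>. if \<sigma> permutes {..n} then H \<sigma> (lex_first_basis (Ms!i) \<sigma>) else 0)) \<sigma>
          = (\<Sum>i\<in>?I. zsmult (a ! i) (H \<sigma> (b i)))"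
        using True by (simp add: sum_fun_apply zs_apply b_def)
      also have "\<dots> = (\<Sum>B\<in>b ` ?I. \<Sum>i\<in>{i\<in>?I. b i = B}. zsmult (a ! i) (H \<sigma> (b i)))"
        by (rule sum.group[symmetric]) auto
      also have "\<dots> = (\<Sum>B\<in>b ` ?I. zsmult (\<Sum>i\<in>{i\<in>?I. b i = B}. a ! i) (H \<sigma> B))"
        by (intro sum.cong refl) (simp add: zs_sum)
      also have "\<dots> = 0"
      proof (rule sum.neutral, rule ballI)
        fix B assume "B \<in> b ` ?I"
        then obtain i0 where i0: "i0 \<in> ?I" "B = b i0" by auto
        have "{i\<in>?I. b i = B} = {i\<in>?I. val \<sigma> (lex_first_basis (Ms!i) \<sigma>) = val \<sigma> B}"
          using val_inj[OF bij finb finb[OF i0(1)]] i0 by (auto simp: b_def)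
        then have "(\<Sum>i\<in>{i\<in>?I. b i = B}. a ! i) = 0"
          using core[OF mats rel True] by simp
        then show "zsmult (\<Sum>i\<in>{i\<in>?I. b i = B}. a ! i) (H \<sigma> B) = 0" by simp
      qed
      finally show ?thesis by simp
    qed
  qed
qed



theorem proposition5p6:
  fixes n :: nat
    and P Q :: "(vb \<times> nat \<Rightarrow>\<^sub>0 nat) \<Rightarrow>\<^sub>0 int"
  shows "valuative n (K_class n P) \<and> valuative n (chowT_class n Q) \<and>
         valuative_nonequiv n (chowT_class n Q)"
proof -
  define HK where "HK \<sigma> B = poly_eval (\<lambda>(b, k). case b of
      Sb \<Rightarrow> elem_sym k TTinv B
    | Qb \<Rightarrow> elem_sym k TTinv ({..n} - B)
    | Sdual \<Rightarrow> elem_sym k TT B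
    | Qdual \<Rightarrow> elem_sym k TT ({..n} - B)) P" for \<sigma> :: "nat \<Rightarrow> nat" and B
  define HC where "HC \<sigma> B = poly_eval (\<lambda>(b, k). case b of
      Sb \<Rightarrow> elem_sym k (\<lambda>i. - tt i) B
    | Qb \<Rightarrow> elem_sym k (\<lambda>i. - tt i) ({..n} - B)
    | Sdual \<Rightarrow> elem_sym k tt B
    | Qdual \<Rightarrow> elem_sym k tt ({..n} - B)) Q" for \<sigma> :: "nat \<Rightarrow> nat" and B
  have K: "K_class n P = (\<lambda>M \<sigma>. if \<sigma> permutes {..n} then HK \<sigma> (lex_first_basis M \<sigma>) else 0)"
    unfolding K_class_def ext_power_at_def[abs_def] HK_def Let_def by (intro ext) simp
  have C: "chowT_class n Q = (\<lambda>M \<sigma>. if \<sigma> permutes {..n} then HC \<sigma> (lex_first_basis M \<sigma>) else 0)"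
    unfolding chowT_class_def chern_at_def[abs_def] HC_def Let_def by (intro ext) simp
  have v1: "valuative n (K_class n P)" unfolding K by (rule val_gen)
  have v2: "valuative n (chowT_class n Q)" unfolding C by (rule val_gen)
  have zk: "0 \<in> forget_kernel n"
  proof -
    have g: "\<forall>j\<le>n. (\<lambda>_ _. (0::cpoly)) j \<in> chowT_ring n" by (simp add: chowT_ring_def)
    have e: "(0 :: (nat \<Rightarrow> nat) \<Rightarrow> cpoly) = (\<Sum>j\<le>n. (\<lambda>\<sigma>. tt j * (\<lambda>_ _. (0::cpoly)) j \<sigma>))"
      by (rule sym, rule sum.neutral) (simp add: zero_fun_def)
    show ?thesis unfolding forget_kernel_def mem_Collect_eq
      by (rule exI[of _ "\<lambda>_ _. 0"], rule conjI[OF g e])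
  qed
  have v3: "valuative_nonequiv n (chowT_class n Q)"
    unfolding valuative_nonequiv_def
  proof (intro allI impI)
    fix Ms :: "nat set set list" and a :: "int list"
    assume h: "length a = length Ms" "\<forall>M\<in>set Ms. matroid_on {..n} M"
      "\<forall>x. (\<Sum>i<length Ms. a ! i * indicator (base_polytope (Ms ! i)) x) = (0::int)"
    have "(\<Sum>i<length Ms. zsmult (a ! i) (chowT_class n Q (Ms ! i))) = 0"
      using v2 h unfolding valuative_def by blast
    then show "(\<Sum>i<length Ms. zsmult (a ! i) (chowT_class n Q (Ms ! i))) \<in> forget_kernel n"
      using zk by simp
  qed
  show ?thesis using v1 v2 v3 by blast
qed

end
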